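(* Let $N\ge1$ be an integer and $f\in L^2(\pi)$. Then $\langle f,P_Nf\rangle_\pi\ge\langle f,P_{N+1}f\rangle_\pi$, and the inequality is strict if and only if $\|f-\mathbb{E}_\pi[f]\|_\pi>0$.
   Context: Let $\pi,q$ be probability densities with respect to a $\sigma$-finite measure $\mu$ on $(\mathbb{X},\mathcal{X})$ with $q>0$ wherever $\pi>0$; $\pi(dx)=\pi(x)\mu(dx)$, $q(dx)=q(x)\mu(dx)$, $\mathbb{S}=\{\pi>0\}$, $w=\pi/q$ on $\mathbb{S}$ and $0$ elsewhere. For integer $N\ge1$ and $z_1\in\mathbb{S}$, $P_N(z_1,A)=\int_{\mathbb{X}^{N-1}}\sum_{i=1}^N\frac{w(z_i)}{\sum_{j=1}^Nw(z_j)}\mathbf 1\{z_i\in A\}\prod_{n=2}^Nq(dz_n)$, $P_1(z,\cdot)=\delta_z$, $P_Nf(x)=\int f(y)P_N(x,dy)$; $\langle g,h\rangle_\pi=\int gh\,d\pi$, $\|g\|_\pi^2=\langle g,g\rangle_\pi$. *)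

theory Defs
  imports "HOL-Probability.Probability"
begin

definition mtm_w :: "('a \<Rightarrow> real) \<Rightarrow> ('a \<Rightarrow> real) \<Rightarrow> 'a \<Rightarrow> real" where
  "mtm_w p q x = (if p x > 0 then p x / q x else 0)"

definition mtm_op :: "'a measure \<Rightarrow> ('a \<Rightarrow> real) \<Rightarrow> ('a \<Rightarrow> real) \<Rightarrow> nat
    \<Rightarrow> ('a \<Rightarrow> real) \<Rightarrow> 'a \<Rightarrow> real" where
  "mtm_op M p q N f x =
     (\<integral>z. (let z' = z(1 := x) in
            (\<Sum>i\<in>{1..N}. mtm_w p q (z' i) / (\<Sum>j\<in>{1..N}. mtm_w p q (z' j)) * f (z' i)))
       \<partial>(\<Pi>\<^sub>M n\<in>{2..N}. density M (\<lambda>y. ennreal (q y))))"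

definition pi_inner :: "'a measure \<Rightarrow> ('a \<Rightarrow> real) \<Rightarrow> ('a \<Rightarrow> real) \<Rightarrow> ('a \<Rightarrow> real) \<Rightarrow> real" where
  "pi_inner M p g h = (\<integral>x. g x * h x \<partial>(density M (\<lambda>y. ennreal (p y))))"

definition pi_norm :: "'a measure \<Rightarrow> ('a \<Rightarrow> real) \<Rightarrow> ('a \<Rightarrow> real) \<Rightarrow> real" where
  "pi_norm M p g = sqrt (pi_inner M p g g)"

definition pi_expect :: "'a measure \<Rightarrow> ('a \<Rightarrow> real) \<Rightarrow> ('a \<Rightarrow> real) \<Rightarrow> real" where
  "pi_expect M p f = (\<integral>x. f x \<partial>(density M (\<lambda>y. ennreal (p y))))"

end

theory Submission
  imports Defs
begin

lemma wvar:
  fixes a x :: "nat \<Rightarrow> real"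
  shows "(\<Sum>i\<in>J. a i * (x i - m)\<^sup>2) = (\<Sum>i\<in>J. a i * (x i)\<^sup>2) - 2 * m * (\<Sum>i\<in>J. a i * x i) + m\<^sup>2 * (\<Sum>i\<in>J. a i)"
  proof -
  have "(\<Sum>i\<in>J. a i * (x i - m)\<^sup>2) = (\<Sum>i\<in>J. a i * (x i)\<^sup>2 - 2 * m * (a i * x i) + m\<^sup>2 * a i)"
    by (intro sum.cong refl) (simp add: power2_diff algebra_simps)
  then show ?thesis by (simp add: sum.distrib sum_subtractf sum_distrib_left[symmetric])
qed

lemma T_le_D:
  fixes a x :: "nat \<Rightarrow> real"
  assumes "finite J" "\<And>i. i \<in> J \<Longrightarrow> a i \<ge> 0"
  shows "(\<Sum>i\<in>J. a i * x i)\<^sup>2 / (\<Sum>i\<in>J. a i) \<le> (\<Sum>i\<in>J. a i * (x i)\<^sup>2)"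
proof -
  let ?W = "\<Sum>i\<in>J. a i" and ?A = "\<Sum>i\<in>J. a i * x i" and ?D = "\<Sum>i\<in>J. a i * (x i)\<^sup>2"
  have D0: "?D \<ge> 0" using assms by (intro sum_nonneg) auto
  have W0: "?W \<ge> 0" using assms by (intro sum_nonneg) auto
  show ?thesis
  proof (cases "?W = 0")
    case True then show ?thesis using D0 by simp
  next
    case False
    then have Wp: "?W > 0" using W0 by simp
    have "0 \<le> (\<Sum>i\<in>J. a i * (x i - ?A/?W)\<^sup>2)" using assms by (intro sum_nonneg) auto
    also have "\<dots> = ?D - 2 * (?A/?W) * ?A + (?A/?W)\<^sup>2 * ?W" by (rule wvar)
    also have "\<dots> = ?D - ?A\<^sup>2 / ?W" using Wp by (simp add: field_simps power2_eq_square)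
    finally show ?thesis by simp
  qed
qed

lemma G_le_D:
  fixes a x :: "nat \<Rightarrow> real"
  assumes "finite J" "\<And>i. i \<in> J \<Longrightarrow> a i \<ge> 0" "k \<in> J"
  shows "\<bar>a k * x k * (\<Sum>i\<in>J. a i * x i) / (\<Sum>i\<in>J. a i)\<bar> \<le> (\<Sum>i\<in>J. a i * (x i)\<^sup>2)"
proof -
  let ?W = "\<Sum>i\<in>J. a i" and ?A = "\<Sum>i\<in>J. a i * x i" and ?D = "\<Sum>i\<in>J. a i * (x i)\<^sup>2"
  have D0: "?D \<ge> 0" using assms by (intro sum_nonneg) auto
  have W0: "?W \<ge> 0" using assms by (intro sum_nonneg) auto
  have ak: "a k \<ge> 0" using assms by auto
  have akW: "a k \<le> ?W" using assms by (intro member_le_sum) auto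
  have akD: "a k * (x k)\<^sup>2 \<le> ?D" using assms by (intro member_le_sum) auto
  show ?thesis
  proof (cases "?W = 0")
    case True then show ?thesis using D0 by simp
  next
    case False
    then have Wp: "?W > 0" using W0 by simp
    define m where "m = ?A / ?W"
    have TD: "?A\<^sup>2 / ?W \<le> ?D" by (rule T_le_D[OF assms(1,2)])
    have "a k * m\<^sup>2 \<le> ?W * m\<^sup>2" using akW by (intro mult_right_mono) auto
    also have "?W * m\<^sup>2 = ?A\<^sup>2 / ?W" using Wp unfolding m_def by (simp add: field_simps power2_eq_square)
    finally have 1: "a k * m\<^sup>2 \<le> ?D" using TD by linarith
    have 2: "2 * \<bar>a k * x k * m\<bar> \<le> a k * (x k)\<^sup>2 + a k * m\<^sup>2"
    proof -
      have "0 \<le> a k * (\<bar>x k\<bar> - \<bar>m\<bar>)\<^sup>2" using ak by simp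
      then have "0 \<le> a k * (x k)\<^sup>2 + a k * m\<^sup>2 - 2 * (a k * \<bar>x k\<bar> * \<bar>m\<bar>)"
        by (simp add: power2_diff right_diff_distrib distrib_left mult.assoc)
      moreover have "\<bar>a k * x k * m\<bar> = a k * \<bar>x k\<bar> * \<bar>m\<bar>" using ak by (simp add: abs_mult)
      ultimately show ?thesis by linarith
    qed
    have "\<bar>a k * x k * ?A / ?W\<bar> = \<bar>a k * x k * m\<bar>" unfolding m_def by simp
    then show ?thesis using 1 2 akD by linarith
  qed
qed


lemma term_id:
  fixes y x' m :: real
  assumes "y = 0 \<Longrightarrow> x' = 0"
  shows "y * (x'/y - m)\<^sup>2 = x'\<^sup>2 / y - 2 * m * x' + m\<^sup>2 * y"
proof (cases "y = 0")
  case True then show ?thesis using assms by simp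
next
  case False then show ?thesis by (simp add: field_simps power2_eq_square)
qed

lemma delta_eq:
  fixes a x :: "nat \<Rightarrow> real"
  assumes fin: "finite I" and nn: "\<And>i. i \<in> I \<Longrightarrow> a i \<ge> 0"
  shows "(\<Sum>k\<in>I. (\<Sum>i\<in>I-{k}. a i * x i)\<^sup>2 / (\<Sum>i\<in>I-{k}. a i))
           - (real (card I) - 1) * ((\<Sum>i\<in>I. a i * x i)\<^sup>2 / (\<Sum>i\<in>I. a i))
         = (\<Sum>k\<in>I. (\<Sum>i\<in>I-{k}. a i) * ((\<Sum>i\<in>I-{k}. a i * x i) / (\<Sum>i\<in>I-{k}. a i)
               - (\<Sum>i\<in>I. a i * x i) / (\<Sum>i\<in>I. a i))\<^sup>2)"
proof -
  let ?W = "\<Sum>i\<in>I. a i" and ?A = "\<Sum>i\<in>I. a i * x i"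
  let ?y = "\<lambda>k. \<Sum>i\<in>I-{k}. a i" and ?x = "\<lambda>k. \<Sum>i\<in>I-{k}. a i * x i"
  define m where "m = ?A / ?W"
  have W0: "?W \<ge> 0" using nn by (intro sum_nonneg) auto
  show ?thesis
  proof (cases "?W = 0")
    case True
    then have a0: "\<forall>i\<in>I. a i = 0" using sum_nonneg_eq_0_iff[OF fin] nn by blast
    then show ?thesis by simp
  next
    case False
    then have Wp: "?W > 0" using W0 by simp
    have yx: "?y k = 0 \<Longrightarrow> ?x k = 0" for k
    proof -
      assume "?y k = 0"
      then have "\<forall>i\<in>I-{k}. a i = 0" using sum_nonneg_eq_0_iff[of "I-{k}" a] fin nn by blast
      then show "?x k = 0" by simp
    qed
    have sy: "(\<Sum>k\<in>I. ?y k) = (real (card I) - 1) * ?W"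
    proof -
      have "(\<Sum>k\<in>I. ?y k) = (\<Sum>k\<in>I. ?W - a k)"
        using fin by (intro sum.cong refl) (simp add: sum_diff1)
      also have "\<dots> = real (card I) * ?W - ?W" by (simp add: sum_subtractf)
      finally show ?thesis by (simp add: algebra_simps)
    qed
    have sx: "(\<Sum>k\<in>I. ?x k) = (real (card I) - 1) * ?A"
    proof -
      have "(\<Sum>k\<in>I. ?x k) = (\<Sum>k\<in>I. ?A - a k * x k)"
        using fin by (intro sum.cong refl) (simp add: sum_diff1)
      also have "\<dots> = real (card I) * ?A - ?A" by (simp add: sum_subtractf)
      finally show ?thesis by (simp add: algebra_simps)
    qed
    have "(\<Sum>k\<in>I. ?y k * (?x k / ?y k - m)\<^sup>2) = (\<Sum>k\<in>I. (?x k)\<^sup>2 / ?y k - 2 * m * ?x k + m\<^sup>2 * ?y k)"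
      by (intro sum.cong refl term_id yx)
    also have "\<dots> = (\<Sum>k\<in>I. (?x k)\<^sup>2 / ?y k) - 2 * m * (\<Sum>k\<in>I. ?x k) + m\<^sup>2 * (\<Sum>k\<in>I. ?y k)"
      by (simp add: sum.distrib sum_subtractf sum_distrib_left[symmetric])
    also have "\<dots> = (\<Sum>k\<in>I. (?x k)\<^sup>2 / ?y k) - (real (card I) - 1) * (?A\<^sup>2 / ?W)"
      unfolding sx sy m_def using Wp by (simp add: field_simps power2_eq_square)
    finally show ?thesis unfolding m_def by simp
  qed
qed

lemma delta_nonneg:
  fixes a x :: "nat \<Rightarrow> real"
  assumes fin: "finite I" and nn: "\<And>i. i \<in> I \<Longrightarrow> a i \<ge> 0"
  shows "(real (card I) - 1) * ((\<Sum>i\<in>I. a i * x i)\<^sup>2 / (\<Sum>i\<in>I. a i))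
     \<le> (\<Sum>k\<in>I. (\<Sum>i\<in>I-{k}. a i * x i)\<^sup>2 / (\<Sum>i\<in>I-{k}. a i))"
proof -
  have "0 \<le> (\<Sum>k\<in>I. (\<Sum>i\<in>I-{k}. a i) * ((\<Sum>i\<in>I-{k}. a i * x i) / (\<Sum>i\<in>I-{k}. a i)
               - (\<Sum>i\<in>I. a i * x i) / (\<Sum>i\<in>I. a i))\<^sup>2)"
    using nn by (intro sum_nonneg mult_nonneg_nonneg) auto
  then show ?thesis using delta_eq[where I=I and a=a and x=x, OF assms] by linarith
qed

lemma delta_pos:
  fixes a x :: "nat \<Rightarrow> real"
  assumes fin: "finite I" and nn: "\<And>i. i \<in> I \<Longrightarrow> a i \<ge> 0"
    and k: "k1 \<in> I" "k2 \<in> I" "k1 \<noteq> k2" "a k1 > 0" "a k2 > 0" "x k1 \<noteq> x k2"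
  shows "(real (card I) - 1) * ((\<Sum>i\<in>I. a i * x i)\<^sup>2 / (\<Sum>i\<in>I. a i))
     < (\<Sum>k\<in>I. (\<Sum>i\<in>I-{k}. a i * x i)\<^sup>2 / (\<Sum>i\<in>I-{k}. a i))"
proof (rule ccontr)
  let ?W = "\<Sum>i\<in>I. a i" and ?A = "\<Sum>i\<in>I. a i * x i"
  let ?y = "\<lambda>k. \<Sum>i\<in>I-{k}. a i" and ?x = "\<lambda>k. \<Sum>i\<in>I-{k}. a i * x i"
  define m where "m = ?A / ?W"
  assume "\<not> ?thesis"
  then have "(\<Sum>k\<in>I. ?y k * (?x k / ?y k - m)\<^sup>2) = 0"
    using delta_eq[where I=I and a=a and x=x, OF fin nn] delta_nonneg[where I=I and a=a and x=x, OF fin nn] unfolding m_def by linarith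
  then have z: "\<forall>k\<in>I. ?y k * (?x k / ?y k - m)\<^sup>2 = 0"
    using nn fin by (subst (asm) sum_nonneg_eq_0_iff) (auto intro!: mult_nonneg_nonneg sum_nonneg)
  have Wk: "a k \<le> ?W" if "k \<in> I" for k using that fin nn by (intro member_le_sum) auto
  have Wp: "?W > 0" using Wk[OF k(1)] k by linarith
  have "x k = m" if kI: "k \<in> I" and yk: "?y k > 0" and ak: "a k > 0" for k
  proof -
    have "?x k / ?y k = m" using z kI yk by auto
    then have e1: "?x k = m * ?y k" using yk by (simp add: field_simps)
    have e2: "?x k = ?A - a k * x k" and e3: "?y k = ?W - a k" using fin kI by (simp_all add: sum_diff1)
    have e4: "?A = m * ?W" using Wp unfolding m_def by simp
    have "a k * x k = ?A - ?x k" using e2 by linarith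
    also have "\<dots> = m * ?W - m * (?W - a k)" using e1 e3 e4 by simp
    also have "\<dots> = a k * m" by (simp add: algebra_simps)
    finally have "a k * x k = a k * m" .
    then show ?thesis using ak by simp
  qed
  moreover have "?y k1 \<ge> a k2" "?y k2 \<ge> a k1" using k fin nn by (auto intro!: member_le_sum)
  ultimately have "x k1 = m" "x k2 = m" using k by fastforce+
  then show False using k by simp
qed

lemma delta_const:
  fixes a x :: "nat \<Rightarrow> real"
  assumes fin: "finite I" and nn: "\<And>i. i \<in> I \<Longrightarrow> a i \<ge> 0"
    and c: "\<And>i. i \<in> I \<Longrightarrow> a i > 0 \<Longrightarrow> x i = c"
  shows "(real (card I) - 1) * ((\<Sum>i\<in>I. a i * x i)\<^sup>2 / (\<Sum>i\<in>I. a i))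
     = (\<Sum>k\<in>I. (\<Sum>i\<in>I-{k}. a i * x i)\<^sup>2 / (\<Sum>i\<in>I-{k}. a i))"
proof -
  let ?W = "\<Sum>i\<in>I. a i" and ?A = "\<Sum>i\<in>I. a i * x i"
  let ?y = "\<lambda>k. \<Sum>i\<in>I-{k}. a i" and ?x = "\<lambda>k. \<Sum>i\<in>I-{k}. a i * x i"
  have ax: "a i * x i = c * a i" if "i \<in> I" for i
    using nn[OF that] c[OF that] by (cases "a i > 0") auto
  have xy: "?x k = c * ?y k" for k by (simp add: ax sum_distrib_left)
  have A: "?A = c * ?W" by (simp add: ax sum_distrib_left)
  have yW: "?y k \<le> ?W" for k using fin nn by (intro sum_mono2) auto
  have "(\<Sum>k\<in>I. ?y k * (?x k / ?y k - ?A / ?W)\<^sup>2) = 0"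
  proof (intro sum.neutral ballI)
    fix k assume "k \<in> I"
    show "?y k * (?x k / ?y k - ?A / ?W)\<^sup>2 = 0"
    proof (cases "?y k = 0")
      case False
      have "?y k \<ge> 0" using nn by (intro sum_nonneg) auto
      then have "?W > 0" using False yW[of k] by linarith
      then show ?thesis using False unfolding xy A by simp
    qed simp
  qed
  then show ?thesis using delta_eq[where I=I and a=a and x=x, OF fin nn] by linarith
qed


locale mtm =
  fixes M :: "'a measure" and p q f :: "'a \<Rightarrow> real"
  assumes sfM: "sigma_finite_measure M"
    and pm[measurable]: "p \<in> borel_measurable M" and qm[measurable]: "q \<in> borel_measurable M"
    and p_nn: "\<And>x. p x \<ge> 0" and q_nn: "\<And>x. q x \<ge> 0"
    and p1: "(\<integral>\<^sup>+x. ennreal (p x) \<partial>M) = 1" and q1: "(\<integral>\<^sup>+x. ennreal (q x) \<partial>M) = 1"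
    and pq: "\<And>x. p x > 0 \<Longrightarrow> q x > 0"
    and fm[measurable]: "f \<in> borel_measurable M"
    and f2: "integrable (density M (\<lambda>x. ennreal (p x))) (\<lambda>x. (f x)\<^sup>2)"
begin

abbreviation "Q \<equiv> density M (\<lambda>x. ennreal (q x))"
abbreviation "P \<equiv> density M (\<lambda>x. ennreal (p x))"
abbreviation "w \<equiv> mtm_w p q"

lemma wm[measurable]: "w \<in> borel_measurable M"
  unfolding mtm_w_def by measurable

lemma w_nn: "w x \<ge> 0"
  unfolding mtm_w_def using q_nn[of x] by auto

lemma qw: "q x * w x = p x"
  unfolding mtm_w_def using pq[of x] p_nn[of x] by (cases "p x > 0") auto

lemma w_pos: "w x > 0 \<longleftrightarrow> p x > 0"
  unfolding mtm_w_def using pq[of x] p_nn[of x] by auto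

lemma sets_Q[measurable_cong, simp]: "sets Q = sets M" by simp

lemma probQ: "prob_space Q"
  by (rule prob_spaceI) (simp add: emeasure_density q1 nn_integral_cong[of _ _ "\<lambda>x. ennreal (q x)"] )

lemma probP: "prob_space P"
  by (rule prob_spaceI) (simp add: emeasure_density p1)

lemma wQ[measurable]: "w \<in> borel_measurable Q" by simp
lemma fQ[measurable]: "f \<in> borel_measurable Q" by simp

lemma int_wf2: "integrable Q (\<lambda>x. w x * (f x)\<^sup>2)"
proof -
  have "integrable M (\<lambda>x. p x * (f x)\<^sup>2)"
    using f2 by (subst (asm) integrable_density) (auto simp: p_nn)
  then have "integrable M (\<lambda>x. q x * (w x * (f x)\<^sup>2))"
    by (simp add: qw mult.assoc[symmetric])
  then show ?thesis
    by (subst integrable_density) (auto simp: q_nn)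
qed

end


context mtm begin

abbreviation "PI I \<equiv> PiM I (\<lambda>_::nat. Q)"
abbreviation "Wt (J::nat set) z \<equiv> \<Sum>i\<in>J. w (z i)"
abbreviation "At (J::nat set) z \<equiv> \<Sum>i\<in>J. w (z i) * f (z i)"
abbreviation "Dt (J::nat set) z \<equiv> \<Sum>i\<in>J. w (z i) * (f (z i))\<^sup>2"
abbreviation "Tt (J::nat set) z \<equiv> (At J z)\<^sup>2 / Wt J z"
abbreviation "Gk (J::nat set) (k::nat) z \<equiv> w (z k) * f (z k) * At J z / Wt J z"

lemma pps: "product_prob_space (\<lambda>_::nat. Q)"
  using probQ by (simp add: product_prob_space_def product_sigma_finite_def
      product_prob_space_axioms_def prob_space_imp_sigma_finite)

lemma probPI: "prob_space (PI I)"
  by (rule prob_space_PiM) (rule probQ)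

lemma comp_meas: "i \<in> I \<Longrightarrow> g \<in> borel_measurable M \<Longrightarrow> (\<lambda>z. g (z i)) \<in> borel_measurable (PI I)"
  by (rule measurable_compose[OF measurable_component_singleton]) auto

lemma comp_int:
  assumes i: "i \<in> I" and g: "integrable Q (g :: 'a \<Rightarrow> real)"
  shows "integrable (PI I) (\<lambda>z. g (z i))"
proof -
  have d: "distr (PI I) Q (\<lambda>\<omega>. \<omega> i) = Q"
    using distr_PiM_component[of I "\<lambda>_. Q" i] probQ i by simp
  have gm: "g \<in> borel_measurable Q" using g by auto
  have "integrable (distr (PI I) Q (\<lambda>\<omega>. \<omega> i)) g" using d g by simp
  moreover have "(\<lambda>\<omega>. \<omega> i) \<in> measurable (PI I) Q"
    using measurable_component_singleton[OF i, of "\<lambda>_. Q"] by simp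
  ultimately show ?thesis using integrable_distr_eq[of "\<lambda>\<omega>. \<omega> i" "PI I" Q g] gm by simp
qed

lemma Tt_meas: "J \<subseteq> I \<Longrightarrow> Tt J \<in> borel_measurable (PI I)"
  by (intro borel_measurable_divide borel_measurable_power borel_measurable_sum borel_measurable_times comp_meas) auto

lemma Dt_meas: "J \<subseteq> I \<Longrightarrow> Dt J \<in> borel_measurable (PI I)"
  by (intro borel_measurable_power borel_measurable_sum borel_measurable_times comp_meas) auto

lemma Gk_meas: "k \<in> I \<Longrightarrow> Gk I k \<in> borel_measurable (PI I)"
  by (intro borel_measurable_divide borel_measurable_power borel_measurable_sum borel_measurable_times comp_meas) auto

lemma Dt_int: assumes "J \<subseteq> I" shows "integrable (PI I) (Dt J)"
proof (rule Bochner_Integration.integrable_sum)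
  fix i assume "i \<in> J"
  then show "integrable (PI I) (\<lambda>z. w (z i) * (f (z i))\<^sup>2)"
    using comp_int[of i I "\<lambda>x. w x * (f x)\<^sup>2"] int_wf2 assms by auto
qed

lemma Tt_bounds: "finite J \<Longrightarrow> 0 \<le> Tt J z \<and> Tt J z \<le> Dt J z"
  using T_le_D[of J "\<lambda>i. w (z i)" "\<lambda>i. f (z i)"] w_nn
  by (auto intro!: divide_nonneg_nonneg sum_nonneg)

lemma Dt_mono: "finite I \<Longrightarrow> J \<subseteq> I \<Longrightarrow> Dt J z \<le> Dt I z"
  using w_nn by (intro sum_mono2) auto

lemma Tt_int:
  assumes "finite I" "J \<subseteq> I"
  shows "integrable (PI I) (Tt J)"
proof (rule Bochner_Integration.integrable_bound[OF Dt_int[OF order_refl]])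
  show "Tt J \<in> borel_measurable (PI I)" by (rule Tt_meas[OF assms(2)])
  have "finite J" using assms finite_subset by blast
  show "AE x in PI I. norm (Tt J x) \<le> norm (Dt I x)"
  proof (intro AE_I2)
    fix z
    have "0 \<le> Tt J z" "Tt J z \<le> Dt J z" using Tt_bounds[OF \<open>finite J\<close>, of z] by auto
    moreover have "Dt J z \<le> Dt I z" using Dt_mono[OF assms] .
    ultimately show "norm (Tt J z) \<le> norm (Dt I z)" by simp
  qed
qed

lemma Gk_int:
  assumes "finite I" "k \<in> I"
  shows "integrable (PI I) (Gk I k)"
proof (rule Bochner_Integration.integrable_bound[OF Dt_int[OF order_refl]])
  show "Gk I k \<in> borel_measurable (PI I)" by (rule Gk_meas[OF assms(2)])
  show "AE x in PI I. norm (Gk I k x) \<le> norm (Dt I x)"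
  proof (intro AE_I2)
    fix z
    have "\<bar>Gk I k z\<bar> \<le> Dt I z"
      using G_le_D[of I "\<lambda>i. w (z i)" k "\<lambda>i. f (z i)"] w_nn assms by auto
    moreover have "Dt I z \<ge> 0" using w_nn by (intro sum_nonneg) auto
    ultimately show "norm (Gk I k z) \<le> norm (Dt I z)" by simp
  qed
qed

lemma perm_int:
  assumes t: "bij_betw t I I" and g: "(g :: (nat \<Rightarrow> 'a) \<Rightarrow> real) \<in> borel_measurable (PI I)"
  shows "(\<integral>z. g (\<lambda>i\<in>I. z (t i)) \<partial>PI I) = (\<integral>z. g z \<partial>PI I)"
proof -
  have tI: "t \<in> I \<rightarrow> I" using t by (auto simp: bij_betw_def)
  have d: "distr (PI I) (PI I) (\<lambda>\<omega>. \<lambda>n\<in>I. \<omega> (t n)) = PI I"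
    using distr_PiM_reindex[of I "\<lambda>_. Q" t I] probQ t tI by (simp add: bij_betw_def)
  have m: "(\<lambda>\<omega>. \<lambda>n\<in>I. \<omega> (t n)) \<in> measurable (PI I) (PI I)"
    using tI by (intro measurable_restrict measurable_component_singleton) auto
  have "(\<integral>z. g z \<partial>PI I) = (\<integral>z. g z \<partial>distr (PI I) (PI I) (\<lambda>\<omega>. \<lambda>n\<in>I. \<omega> (t n)))"
    by (simp add: d)
  also have "\<dots> = (\<integral>z. g (\<lambda>i\<in>I. z (t i)) \<partial>PI I)"
    by (rule integral_distr[OF m g])
  finally show ?thesis by simp
qed

lemma restr_int:
  assumes "J \<subseteq> I" "finite I" and g: "(g :: (nat \<Rightarrow> 'a) \<Rightarrow> real) \<in> borel_measurable (PI J)"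
  shows "(\<integral>z. g (restrict z J) \<partial>PI I) = (\<integral>z. g z \<partial>PI J)"
proof -
  interpret PQ: product_prob_space "\<lambda>_::nat. Q" by (rule pps)
  have d: "PI J = distr (PI I) (PI J) (\<lambda>z. restrict z J)"
    using PQ.distr_restrict[OF assms(1,2)] by simp
  have m: "(\<lambda>z. restrict z J) \<in> measurable (PI I) (PI J)"
    using assms(1) by (intro measurable_restrict measurable_component_singleton) auto
  show ?thesis
    by (subst d, subst integral_distr[OF m]) (use d g in auto)
qed

end


definition tr :: "nat \<Rightarrow> nat \<Rightarrow> nat \<Rightarrow> nat" where
  "tr h k i = (if i = h then k else if i = k then h else i)"

lemma tr_bij: "h \<in> I \<Longrightarrow> k \<in> I \<Longrightarrow> bij_betw (tr h k) I I"
  by (rule bij_betwI[where g="tr h k"]) (auto simp: tr_def)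

lemma tr_bij2: "h \<in> I \<Longrightarrow> k \<in> I \<Longrightarrow> bij_betw (tr h k) (I - {h}) (I - {k})"
  by (rule bij_betwI[where g="tr h k"]) (auto simp: tr_def)

context mtm begin

lemma Gsym:
  assumes fin: "finite I" and h: "h \<in> I" and k: "k \<in> I"
  shows "(\<integral>z. Gk I h z \<partial>PI I) = (\<integral>z. Gk I k z \<partial>PI I)"
proof -
  have b: "bij_betw (tr h k) I I" by (rule tr_bij[OF h k])
  have s: "(\<Sum>i\<in>I. g ((\<lambda>i\<in>I. z (tr h k i)) i)) = (\<Sum>i\<in>I. g (z i))" for g :: "'a \<Rightarrow> real" and z
  proof -
    have "(\<Sum>i\<in>I. g ((\<lambda>i\<in>I. z (tr h k i)) i)) = (\<Sum>i\<in>I. g (z (tr h k i)))" by simp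
    also have "\<dots> = (\<Sum>i\<in>I. g (z i))" by (rule sum.reindex_bij_betw[OF b, where g="\<lambda>i. g (z i)"])
    finally show ?thesis .
  qed
  have e: "Gk I h (\<lambda>i\<in>I. z (tr h k i)) = Gk I k z" for z
  proof -
    have zh: "(\<lambda>i\<in>I. z (tr h k i)) h = z k" using h by (simp add: tr_def)
    show ?thesis unfolding zh
      using s[of "\<lambda>y. w y * f y" z] s[of w z] by simp
  qed
  have "(\<integral>z. Gk I h z \<partial>PI I) = (\<integral>z. Gk I h (\<lambda>i\<in>I. z (tr h k i)) \<partial>PI I)"
    by (rule perm_int[OF b Gk_meas[OF h], symmetric])
  also have "\<dots> = (\<integral>z. Gk I k z \<partial>PI I)" by (simp only: e)
  finally show ?thesis .
qed

lemma S2: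
  assumes fin: "finite I" and k: "k \<in> I"
  shows "real (card I) * (\<integral>z. Gk I k z \<partial>PI I) = (\<integral>z. Tt I z \<partial>PI I)"
proof -
  have "real (card I) * (\<integral>z. Gk I k z \<partial>PI I) = (\<Sum>h\<in>I. (\<integral>z. Gk I h z \<partial>PI I))"
    using Gsym[OF fin _ k] by simp
  also have "\<dots> = (\<integral>z. (\<Sum>h\<in>I. Gk I h z) \<partial>PI I)"
    by (rule Bochner_Integration.integral_sum[symmetric]) (rule Gk_int[OF fin])
  also have "\<dots> = (\<integral>z. Tt I z \<partial>PI I)"
  proof (intro Bochner_Integration.integral_cong refl)
    fix z
    show "(\<Sum>h\<in>I. Gk I h z) = Tt I z"
      by (simp add: sum_divide_distrib[symmetric] sum_distrib_right[symmetric] power2_eq_square)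
  qed
  finally show ?thesis .
qed

lemma loo:
  assumes fin: "finite I" and k: "k \<in> I" and n: "n \<in> I"
  shows "(\<integral>z. Tt (I - {k}) z \<partial>PI I) = (\<integral>z. Tt (I - {n}) z \<partial>PI I)"
proof -
  have b2: "bij_betw (tr k n) (I - {k}) (I - {n})" by (rule tr_bij2[OF k n])
  have s: "(\<Sum>i\<in>I-{k}. g ((\<lambda>i\<in>I. z (tr k n i)) i)) = (\<Sum>i\<in>I-{n}. g (z i))" for g :: "'a \<Rightarrow> real" and z
  proof -
    have "(\<Sum>i\<in>I-{k}. g ((\<lambda>i\<in>I. z (tr k n i)) i)) = (\<Sum>i\<in>I-{k}. g (z (tr k n i)))" by simp
    also have "\<dots> = (\<Sum>i\<in>I-{n}. g (z i))" by (rule sum.reindex_bij_betw[OF b2, where g="\<lambda>i. g (z i)"])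
    finally show ?thesis .
  qed
  have e: "Tt (I - {k}) (\<lambda>i\<in>I. z (tr k n i)) = Tt (I - {n}) z" for z
    using s[of "\<lambda>y. w y * f y" z] s[of w z] by simp
  have "(\<integral>z. Tt (I - {k}) z \<partial>PI I) = (\<integral>z. Tt (I - {k}) (\<lambda>i\<in>I. z (tr k n i)) \<partial>PI I)"
    by (rule perm_int[OF tr_bij[OF k n] Tt_meas, symmetric]) auto
  also have "\<dots> = (\<integral>z. Tt (I - {n}) z \<partial>PI I)" by (simp only: e)
  finally show ?thesis .
qed

lemma restrT:
  assumes fin: "finite I" and J: "J \<subseteq> I"
  shows "(\<integral>z. Tt J z \<partial>PI I) = (\<integral>z. Tt J z \<partial>PI J)"
proof -
  have "(\<integral>z. Tt J z \<partial>PI I) = (\<integral>z. Tt J (restrict z J) \<partial>PI I)"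
    by (intro Bochner_Integration.integral_cong refl) simp
  also have "\<dots> = (\<integral>z. Tt J z \<partial>PI J)"
    by (rule restr_int[OF J fin Tt_meas[OF order_refl]])
  finally show ?thesis .
qed

end


context mtm begin

lemma upd_meas:
  assumes "I = J \<union> {i}"
  shows "(\<lambda>x. (snd x)(i := fst x)) \<in> measurable (Q \<Otimes>\<^sub>M PI J) (PI I)"
  by (rule measurable_fun_upd[OF assms measurable_snd]) simp

lemma S1:
  assumes N: "N \<ge> 1"
  shows "pi_inner M p f (mtm_op M p q N f) = (\<integral>z. Gk {1..N} 1 z \<partial>PI {1..N})"
proof -
  let ?I = "{1..N}" and ?J = "{2..N}"
  have IJ: "?I = ?J \<union> {1}" using N by auto
  have IJ': "?I = {1} \<union> ?J" using N by auto
  have oneI: "(1::nat) \<in> ?I" using N by simp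
  define F where "F z = (\<Sum>i\<in>?I. w (z i) / (\<Sum>j\<in>?I. w (z j)) * f (z i))" for z :: "nat \<Rightarrow> 'a"
  define H where "H z = w (z 1) * f (z 1) * F z" for z :: "nat \<Rightarrow> 'a"
  have HG: "H z = Gk ?I 1 z" for z
    unfolding H_def F_def by (simp add: sum_divide_distrib[symmetric])
  have Fm: "F \<in> borel_measurable (PI ?I)"
    unfolding F_def
    by (intro borel_measurable_divide borel_measurable_sum borel_measurable_times comp_meas) auto
  have Hm: "H \<in> borel_measurable (PI ?I)"
    unfolding HG[abs_def] by (rule Gk_meas[OF oneI])
  have Hi: "integrable (PI ?I) H"
    unfolding HG[abs_def] by (rule Gk_int[OF _ oneI]) simp
  have um: "(\<lambda>x. (snd x)(1 := fst x)) \<in> measurable (Q \<Otimes>\<^sub>M PI ?J) (PI ?I)"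
    by (rule upd_meas[OF IJ])
  interpret PJ: prob_space "PI ?J" by (rule probPI)
  have g_eq: "mtm_op M p q N f x = (\<integral>z. F (z(1 := x)) \<partial>PI ?J)" for x
    unfolding mtm_op_def F_def Let_def by simp
  have gm: "(\<lambda>x. \<integral>z. F (z(1 := x)) \<partial>PI ?J) \<in> borel_measurable Q"
  proof (rule PJ.borel_measurable_lebesgue_integral)
    show "(\<lambda>(x, z). F (z(1 := x))) \<in> borel_measurable (Q \<Otimes>\<^sub>M PI ?J)"
      using measurable_comp[OF um Fm] by (simp add: comp_def case_prod_beta)
  qed
  have gmM: "(\<lambda>x. mtm_op M p q N f x) \<in> borel_measurable M"
    using gm unfolding g_eq[abs_def] by simp
  have Gm: "(\<lambda>x. \<integral>z. H (z(1 := x)) \<partial>PI ?J) \<in> borel_measurable Q"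
  proof (rule PJ.borel_measurable_lebesgue_integral)
    show "(\<lambda>(x, z). H (z(1 := x))) \<in> borel_measurable (Q \<Otimes>\<^sub>M PI ?J)"
      using measurable_comp[OF um Hm] by (simp add: comp_def case_prod_beta)
  qed
  have "pi_inner M p f (mtm_op M p q N f) = (\<integral>x. f x * mtm_op M p q N f x \<partial>P)"
    unfolding pi_inner_def ..
  also have "\<dots> = (\<integral>x. p x * (f x * mtm_op M p q N f x) \<partial>M)"
    using gmM by (subst integral_density) (auto simp: p_nn)
  also have "\<dots> = (\<integral>x. q x * (w x * f x * mtm_op M p q N f x) \<partial>M)"
    by (intro Bochner_Integration.integral_cong refl) (simp add: qw[symmetric] ac_simps)
  also have "\<dots> = (\<integral>x. w x * f x * mtm_op M p q N f x \<partial>Q)"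
    using gmM by (subst integral_density) (auto simp: q_nn)
  also have "\<dots> = (\<integral>x. (\<integral>z. H (z(1 := x)) \<partial>PI ?J) \<partial>Q)"
  proof (intro Bochner_Integration.integral_cong refl)
    fix x
    have "w x * f x * mtm_op M p q N f x = (\<integral>z. w x * f x * F (z(1 := x)) \<partial>PI ?J)"
      unfolding g_eq by simp
    also have "\<dots> = (\<integral>z. H (z(1 := x)) \<partial>PI ?J)"
      unfolding H_def by simp
    finally show "w x * f x * mtm_op M p q N f x = (\<integral>z. H (z(1 := x)) \<partial>PI ?J)" .
  qed
  also have "\<dots> = (\<integral>z. H z \<partial>PI ?I)"
  proof -
    interpret PQ: product_prob_space "\<lambda>_::nat. Q" by (rule pps)
    have "(\<integral>z. H z \<partial>PI ?I) = (\<integral>z. H z \<partial>PI ({1} \<union> ?J))" by (simp only: IJ'[symmetric])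
    also have "\<dots> = (\<integral>x. (\<integral>y. H (merge {1} ?J (x, y)) \<partial>PI ?J) \<partial>PI {1})"
      by (rule PQ.product_integral_fold) (use Hi IJ' in auto)
    also have "\<dots> = (\<integral>x. (\<lambda>t. \<integral>y. H (y(1 := t)) \<partial>PI ?J) (x 1) \<partial>PI {1})"
    proof (rule Bochner_Integration.integral_cong[OF refl])
      fix x assume "x \<in> space (PI {1})"
      show "(\<integral>y. H (merge {1} ?J (x, y)) \<partial>PI ?J) = (\<lambda>t. \<integral>y. H (y(1 := t)) \<partial>PI ?J) (x 1)"
      proof -
        have "H (merge {1} ?J (x, y)) = H (y(1 := x 1))" if y: "y \<in> space (PI ?J)" for y
        proof -
          have "merge {1} ?J (x, y) = y(1 := x 1)"
          proof
            fix i show "merge {1} ?J (x, y) i = (y(1 := x 1)) i"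
              using y by (auto simp: merge_def space_PiM PiE_def extensional_def)
          qed
          then show ?thesis by simp
        qed
        then show ?thesis by (auto intro: Bochner_Integration.integral_cong)
      qed
    qed
    also have "\<dots> = (\<integral>t. (\<integral>y. H (y(1 := t)) \<partial>PI ?J) \<partial>Q)"
      by (rule PQ.product_integral_singleton[OF Gm])
    finally show ?thesis by simp
  qed
  also have "\<dots> = (\<integral>z. Gk ?I 1 z \<partial>PI ?I)" by (simp only: HG)
  finally show ?thesis .
qed

end


context mtm begin

lemma fP_int: "integrable P f"
proof -
  interpret PP: prob_space P by (rule probP)
  show ?thesis by (rule PP.square_integrable_imp_integrable) (use f2 in auto)
qed

lemma norm_iff: "pi_norm M p (\<lambda>x. f x - c) > 0 \<longleftrightarrow> \<not> (AE x in P. f x = c)"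
proof -
  interpret PP: prob_space P by (rule probP)
  let ?g = "\<lambda>x. (f x - c) * (f x - c)"
  have ge: "?g = (\<lambda>x. (f x)\<^sup>2 - 2 * c * f x + c\<^sup>2)"
    by (auto simp: power2_eq_square algebra_simps)
  have gi: "integrable P ?g"
    unfolding ge using f2 fP_int by (intro Bochner_Integration.integrable_add Bochner_Integration.integrable_diff
        integrable_mult_right PP.integrable_const) auto
  have g0: "integral\<^sup>L P ?g \<ge> 0" by (rule integral_nonneg_AE) auto
  have "integral\<^sup>L P ?g = 0 \<longleftrightarrow> (AE x in P. ?g x = 0)"
    by (rule integral_nonneg_eq_0_iff_AE[OF gi]) auto
  also have "\<dots> \<longleftrightarrow> (AE x in P. f x = c)" by simp
  finally have "integral\<^sup>L P ?g > 0 \<longleftrightarrow> \<not> (AE x in P. f x = c)" using g0 by linarith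
  then show ?thesis unfolding pi_norm_def pi_inner_def by simp
qed

abbreviation "Del I z \<equiv> (\<Sum>k\<in>I. Tt (I - {k}) z) - (real (card I) - 1) * Tt I z"

lemma Del_nonneg: "finite I \<Longrightarrow> Del I z \<ge> 0"
  using delta_nonneg[where I=I and a="\<lambda>i. w (z i)" and x="\<lambda>i. f (z i)"] w_nn by simp

lemma Del_int: "finite I \<Longrightarrow> integrable (PI I) (Del I)"
  by (intro Bochner_Integration.integrable_diff Bochner_Integration.integrable_sum
      integrable_mult_right Tt_int) auto

lemma Del_meas: "finite I \<Longrightarrow> Del I \<in> borel_measurable (PI I)"
  using Del_int by auto

lemma not_AE_ge:
  assumes "\<not> (AE x in P. f x = pi_expect M p f)"
  shows "\<not> (AE x in P. pi_expect M p f \<le> f x)" "\<not> (AE x in P. f x \<le> pi_expect M p f)"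
proof -
  interpret PP: prob_space P by (rule probP)
  let ?c = "pi_expect M p f"
  have c: "?c = integral\<^sup>L P f" unfolding pi_expect_def ..
  show "\<not> (AE x in P. ?c \<le> f x)"
  proof
    assume ae: "AE x in P. ?c \<le> f x"
    have i: "integrable P (\<lambda>x. f x - ?c)" using fP_int by auto
    have "integral\<^sup>L P (\<lambda>x. f x - ?c) = 0"
      using fP_int c PP.prob_space by (subst Bochner_Integration.integral_diff) auto
    then have "AE x in P. f x - ?c = 0"
      using integral_nonneg_eq_0_iff_AE[OF i] ae by auto
    then have "AE x in P. f x = ?c" by auto
    then show False using assms by simp
  qed
  show "\<not> (AE x in P. f x \<le> ?c)"
  proof
    assume ae: "AE x in P. f x \<le> ?c"
    have i: "integrable P (\<lambda>x. ?c - f x)" using fP_int by auto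
    have "integral\<^sup>L P (\<lambda>x. ?c - f x) = 0"
      using fP_int c PP.prob_space by (subst Bochner_Integration.integral_diff) auto
    then have "AE x in P. ?c - f x = 0"
      using integral_nonneg_eq_0_iff_AE[OF i] ae by auto
    then have "AE x in P. f x = ?c" by auto
    then show False using assms by simp
  qed
qed

lemma posQ:
  assumes B: "B = {x \<in> space M. 0 < p x \<and> R (f x)}" and Bs: "B \<in> sets M"
    and nae: "\<not> (AE x in P. \<not> R (f x))"
  shows "measure Q B > 0"
proof (rule ccontr)
  interpret QQ: prob_space Q by (rule probQ)
  assume "\<not> measure Q B > 0"
  then have "measure Q B = 0" using measure_nonneg[of Q B] by linarith
  then have "emeasure Q B = 0" by (simp add: QQ.emeasure_eq_measure)
  then have "AE x in Q. x \<notin> B" using Bs by (intro AE_not_in) auto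
  then have "AE x in M. 0 < q x \<longrightarrow> x \<notin> B" by (subst (asm) AE_density) auto
  then have "AE x in M. 0 < p x \<longrightarrow> \<not> R (f x)"
    using AE_space[of M] by eventually_elim (use pq B in auto)
  then have "AE x in P. \<not> R (f x)" by (subst AE_density) auto
  then show False using nae by simp
qed

end


context mtm begin

lemma strict_iff:
  assumes N: "N \<ge> 1"
  defines "I \<equiv> {1..N+1}"
  shows "(\<integral>z. Del I z \<partial>PI I) > 0 \<longleftrightarrow> \<not> (AE x in P. f x = pi_expect M p f)"
proof -
  let ?c = "pi_expect M p f"
  have fin: "finite I" unfolding I_def by simp
  have oneI: "1 \<in> I" and twoI: "2 \<in> I" using N unfolding I_def by auto
  interpret QQ: prob_space Q by (rule probQ)
  interpret PQ: product_prob_space "\<lambda>_::nat. Q" by (rule pps)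
  interpret PPI: prob_space "PI I" by (rule probPI)
  have i0: "integral\<^sup>L (PI I) (Del I) \<ge> 0" by (rule integral_nonneg_AE) (use Del_nonneg[OF fin] in auto)
  show ?thesis
  proof
    assume pos: "integral\<^sup>L (PI I) (Del I) > 0"
    show "\<not> (AE x in P. f x = ?c)"
    proof
      assume ae: "AE x in P. f x = ?c"
      then have "AE x in M. 0 < p x \<longrightarrow> f x = ?c" by (subst (asm) AE_density) auto
      then have "AE x in M. 0 < q x \<longrightarrow> (0 < w x \<longrightarrow> f x = ?c)"
        by eventually_elim (auto simp: w_pos)
      then have aeQ: "AE x in Q. 0 < w x \<longrightarrow> f x = ?c" by (subst AE_density) auto
      have "AE z in PI I. \<forall>i\<in>I. 0 < w (z i) \<longrightarrow> f (z i) = ?c"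
      proof (rule AE_finite_allI[OF fin])
        fix i assume "i \<in> I"
        then show "AE z in PI I. 0 < w (z i) \<longrightarrow> f (z i) = ?c"
          using AE_PiM_component[of I "\<lambda>_. Q" i "\<lambda>x. 0 < w x \<longrightarrow> f x = ?c"] probQ aeQ by simp
      qed
      then have "AE z in PI I. Del I z = 0"
      proof eventually_elim
        case (elim z)
        then show ?case
          using delta_const[where I=I and a="\<lambda>i. w (z i)" and x="\<lambda>i. f (z i)" and c="?c", OF fin] w_nn
          by simp
      qed
      then have "integral\<^sup>L (PI I) (Del I) = 0" by (rule integral_eq_zero_AE)
      then show False using pos by simp
    qed
  next
    assume nae: "\<not> (AE x in P. f x = ?c)"
    define B1 where "B1 = {x \<in> space M. 0 < p x \<and> f x < ?c}"
    define B2 where "B2 = {x \<in> space M. 0 < p x \<and> ?c < f x}"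
    have B1s: "B1 \<in> sets M" unfolding B1_def by measurable
    have B2s: "B2 \<in> sets M" unfolding B2_def by measurable
    have m1: "measure Q B1 > 0"
      by (rule posQ[OF B1_def B1s]) (use not_AE_ge(1)[OF nae] in \<open>simp add: not_less\<close>)
    have m2: "measure Q B2 > 0"
      by (rule posQ[OF B2_def B2s]) (use not_AE_ge(2)[OF nae] in \<open>simp add: not_less\<close>)
    define h where "h i = (if i = (1::nat) then indicator B1 else if i = 2 then indicator B2 else (\<lambda>_. 1::real))" for i
    have hi: "integrable Q (h i)" for i
      unfolding h_def using B1s B2s by (auto intro!: integrable_indicator simp: QQ.emeasure_eq_measure)
    have hpos: "integral\<^sup>L Q (h i) > 0" for i
    proof -
      have "B1 \<inter> space Q = B1" "B2 \<inter> space Q = B2" unfolding B1_def B2_def by auto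
      then show ?thesis unfolding h_def using m1 m2 QQ.prob_space by auto
    qed
    have gint: "(\<integral>z. (\<Prod>i\<in>I. h i (z i)) \<partial>PI I) = (\<Prod>i\<in>I. integral\<^sup>L Q (h i))"
      by (rule PQ.product_integral_prod[OF fin hi])
    have gpos: "(\<integral>z. (\<Prod>i\<in>I. h i (z i)) \<partial>PI I) > 0"
      unfolding gint by (rule prod_pos) (rule hpos)
    show "integral\<^sup>L (PI I) (Del I) > 0"
    proof (rule ccontr)
      assume "\<not> integral\<^sup>L (PI I) (Del I) > 0"
      then have "integral\<^sup>L (PI I) (Del I) = 0" using i0 by linarith
      then have "AE z in PI I. Del I z = 0"
        using integral_nonneg_eq_0_iff_AE[OF Del_int[OF fin]] Del_nonneg[OF fin] by auto
      then have "AE z in PI I. (\<Prod>i\<in>I. h i (z i)) = 0"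
      proof eventually_elim
        case (elim z)
        show ?case
        proof (rule ccontr)
          assume "(\<Prod>i\<in>I. h i (z i)) \<noteq> 0"
          then have "h 1 (z 1) \<noteq> 0" "h 2 (z 2) \<noteq> 0" using fin oneI twoI by auto
          then have "z 1 \<in> B1" "z 2 \<in> B2" unfolding h_def by (auto simp: indicator_def split: if_splits)
          then have "0 < w (z 1)" "0 < w (z 2)" "f (z 1) \<noteq> f (z 2)"
            unfolding B1_def B2_def by (auto simp: w_pos)
          then have "Del I z > 0"
            using delta_pos[where I=I and a="\<lambda>i. w (z i)" and x="\<lambda>i. f (z i)",
                OF fin _ oneI twoI] w_nn by simp
          then show False using elim by simp
        qed
      qed
      then have "(\<integral>z. (\<Prod>i\<in>I. h i (z i)) \<partial>PI I) = 0" by (rule integral_eq_zero_AE)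
      then show False using gpos by simp
    qed
  qed
qed

end


context mtm begin

lemma main:
  assumes N: "N \<ge> 1"
  shows "pi_inner M p f (mtm_op M p q N f) \<ge> pi_inner M p f (mtm_op M p q (N + 1) f)
    \<and> (pi_inner M p f (mtm_op M p q N f) > pi_inner M p f (mtm_op M p q (N + 1) f)
        \<longleftrightarrow> pi_norm M p (\<lambda>x. f x - pi_expect M p f) > 0)"
proof -
  define I where "I = {1..N+1}"
  define J where "J = {1..N}"
  have fin: "finite I" "finite J" unfolding I_def J_def by auto
  have cI: "card I = N + 1" and cJ: "card J = N" unfolding I_def J_def by auto
  have JI: "J = I - {N+1}" unfolding I_def J_def by auto
  have oneI: "1 \<in> I" and oneJ: "1 \<in> J" using N unfolding I_def J_def by auto
  have nI: "N + 1 \<in> I" unfolding I_def by simp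
  define EJ where "EJ = (\<integral>z. Tt J z \<partial>PI J)"
  define EI where "EI = (\<integral>z. Tt I z \<partial>PI I)"
  have LN: "pi_inner M p f (mtm_op M p q N f) = EJ / real N"
  proof -
    have "pi_inner M p f (mtm_op M p q N f) = (\<integral>z. Gk J 1 z \<partial>PI J)"
      unfolding J_def by (rule S1[OF N])
    moreover have "real N * (\<integral>z. Gk J 1 z \<partial>PI J) = EJ"
      using S2[OF fin(2) oneJ] cJ unfolding EJ_def by simp
    ultimately show ?thesis using N by (simp add: field_simps)
  qed
  have Ln: "pi_inner M p f (mtm_op M p q (N + 1) f) = EI / real (N + 1)"
  proof -
    have "pi_inner M p f (mtm_op M p q (N + 1) f) = (\<integral>z. Gk I 1 z \<partial>PI I)"
      unfolding I_def by (rule S1) simp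
    moreover have "real (N + 1) * (\<integral>z. Gk I 1 z \<partial>PI I) = EI"
      using S2[OF fin(1) oneI] cI unfolding EI_def by simp
    ultimately show ?thesis by (simp add: field_simps)
  qed
  have loo': "(\<integral>z. Tt (I - {k}) z \<partial>PI I) = EJ" if k: "k \<in> I" for k
  proof -
    have "(\<integral>z. Tt (I - {k}) z \<partial>PI I) = (\<integral>z. Tt (I - {N+1}) z \<partial>PI I)"
      by (rule loo[OF fin(1) k nI])
    also have "\<dots> = (\<integral>z. Tt J z \<partial>PI I)" by (simp add: JI)
    also have "\<dots> = EJ" unfolding EJ_def by (rule restrT[OF fin(1)]) (simp add: JI)
    finally show ?thesis .
  qed
  have iD: "(\<integral>z. Del I z \<partial>PI I) = real (N + 1) * EJ - real N * EI"
  proof -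
    have a: "(\<integral>z. Del I z \<partial>PI I) = (\<integral>z. (\<Sum>k\<in>I. Tt (I - {k}) z) \<partial>PI I) - (\<integral>z. (real (card I) - 1) * Tt I z \<partial>PI I)"
      by (rule Bochner_Integration.integral_diff)
        (auto intro!: Bochner_Integration.integrable_sum Tt_int fin
          integrable_mult_right[OF Tt_int[OF fin(1) order_refl]] simp del: times_divide_eq_right)
    have b: "(\<integral>z. (\<Sum>k\<in>I. Tt (I - {k}) z) \<partial>PI I) = (\<Sum>k\<in>I. (\<integral>z. Tt (I - {k}) z \<partial>PI I))"
      by (rule Bochner_Integration.integral_sum) (auto intro!: Tt_int fin)
    have c: "(\<Sum>k\<in>I. (\<integral>z. Tt (I - {k}) z \<partial>PI I)) = real (N + 1) * EJ" using loo' cI by simp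
    have d: "(\<integral>z. (real (card I) - 1) * Tt I z \<partial>PI I) = real N * EI"
      unfolding EI_def cI by (simp del: times_divide_eq_right)
    show ?thesis unfolding a b c d ..
  qed
  have i0: "(\<integral>z. Del I z \<partial>PI I) \<ge> 0" by (rule integral_nonneg_AE) (use Del_nonneg[OF fin(1)] in auto)
  have diff: "pi_inner M p f (mtm_op M p q N f) - pi_inner M p f (mtm_op M p q (N + 1) f)
      = (\<integral>z. Del I z \<partial>PI I) / (real N * real (N + 1))"
    unfolding LN Ln iD using N by (simp add: field_simps)
  have pd: "real N * real (N + 1) > 0" using N by simp
  have "(\<integral>z. Del I z \<partial>PI I) / (real N * real (N + 1)) \<ge> 0" using i0 pd by simp
  moreover have "(\<integral>z. Del I z \<partial>PI I) / (real N * real (N + 1)) > 0 \<longleftrightarrow> (\<integral>z. Del I z \<partial>PI I) > 0"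
    using pd by (simp add: zero_less_divide_iff)
  moreover have "(\<integral>z. Del I z \<partial>PI I) > 0 \<longleftrightarrow> pi_norm M p (\<lambda>x. f x - pi_expect M p f) > 0"
    using strict_iff[OF N] norm_iff unfolding I_def by simp
  ultimately show ?thesis using diff by linarith
qed

end

theorem lemma6p6:
  fixes M :: "'a measure" and p q f :: "'a \<Rightarrow> real" and N :: nat
  assumes "sigma_finite_measure M"
    and "p \<in> borel_measurable M" and "q \<in> borel_measurable M"
    and "\<And>x. p x \<ge> 0" and "\<And>x. q x \<ge> 0"
    and "(\<integral>\<^sup>+x. ennreal (p x) \<partial>M) = 1" and "(\<integral>\<^sup>+x. ennreal (q x) \<partial>M) = 1"
    and "\<And>x. p x > 0 \<Longrightarrow> q x > 0"
    and "N \<ge> 1"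
    and "f \<in> borel_measurable M"
    and "integrable (density M (\<lambda>x. ennreal (p x))) (\<lambda>x. (f x)\<^sup>2)"
  shows "pi_inner M p f (mtm_op M p q N f) \<ge> pi_inner M p f (mtm_op M p q (N + 1) f)
    \<and> (pi_inner M p f (mtm_op M p q N f) > pi_inner M p f (mtm_op M p q (N + 1) f)
        \<longleftrightarrow> pi_norm M p (\<lambda>x. f x - pi_expect M p f) > 0)"
proof -
  interpret mtm M p q f
    by (rule mtm.intro[OF assms(1-8) assms(10,11)])
  show ?thesis by (rule main[OF assms(9)])
qed


end
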